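(* Let $A$, $\phi$, $A_\lambda$, $\mu_\lambda$, $\mu=\mu_0$ be as in the context, let $0\le\alpha\le1$, let $\nu$ be a $\sigma$-finite Borel measure on $\mathbb{R}$ that is uniformly $\alpha$-Hölder continuous, and let $\kappa(B)=\int\mu_\lambda(B)\,\mathrm{d}\nu(\lambda)$. Then there is a constant $C_\alpha$ such that for all $z\in\mathbb{H}^+$, $$P_\kappa(z)\le C_\alpha\left(\frac{|F_\mu(z)|^2}{P_\mu(z)}\right)^{1-\alpha}.$$ In particular $\int\frac{1}{1+x^2}\,\mathrm{d}\kappa(x)<\infty$, so $\kappa$ is finite on compact sets.
   Context: $A$ is a bounded self-adjoint operator on a separable Hilbert space $\mathcal{H}$, $\phi\in\mathcal{H}$ with $\|\phi\|=1$, $A_\lambda:=A+\lambda\langle\phi,\cdot\rangle\phi$, $\mu_\lambda$ is the spectral measure of $A_\lambda$ with respect to $\phi$, and $\mu:=\mu_0$. For a Borel measure $\eta$ and $z=x+i\epsilon\in\mathbb{H}^+$: $F_\eta(z)=\int\frac{\mathrm{d}\eta(y)}{y-z}$ and $P_\eta(x+i\epsilon)=\int\frac{\epsilon}{(y-x)^2+\epsilon^2}\,\mathrm{d}\eta(y)$. A $\sigma$-finite Borel measure $\eta$ is uniformly $\alpha$-Hölder continuous (U$\alpha$H) if there is a constant $K$ with $\eta(I)\le K|I|^\alpha$ for every interval $I$. *)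

theory Defs
  imports "HOL-Analysis.Analysis"
begin

definition bounded_selfadjoint :: "('a::real_inner \<Rightarrow> 'a) \<Rightarrow> bool" where
  "bounded_selfadjoint T \<longleftrightarrow> bounded_linear T \<and> (\<forall>x y. inner (T x) y = inner x (T y))"

definition rank_one_pert :: "('a::real_inner \<Rightarrow> 'a) \<Rightarrow> 'a \<Rightarrow> real \<Rightarrow> 'a \<Rightarrow> 'a" where
  "rank_one_pert T v l x = T x + (l * inner v x) *\<^sub>R v"

text \<open>Spectral measure of T with respect to v: the (unique, compactly supported) finite
  Borel measure m with  <v, T^n v> = integral of x^n dm  for all n.\<close>
definition spectral_measure :: "('a::real_inner \<Rightarrow> 'a) \<Rightarrow> 'a \<Rightarrow> real measure \<Rightarrow> bool" where
  "spectral_measure T v m \<longleftrightarrow> sets m = sets borel \<and> finite_measure m \<and>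
     (\<forall>n::nat. integrable m (\<lambda>x. x ^ n) \<and> (\<integral>x. x ^ n \<partial>m) = inner v ((T ^^ n) v))"

definition borel_transform :: "real measure \<Rightarrow> complex \<Rightarrow> complex" where
  "borel_transform eta z = (\<integral>y. 1 / (complex_of_real y - z) \<partial>eta)"

definition poisson_transform :: "real measure \<Rightarrow> complex \<Rightarrow> ennreal" where
  "poisson_transform eta z =
     (\<integral>\<^sup>+y. ennreal (Im z / ((y - Re z)\<^sup>2 + (Im z)\<^sup>2)) \<partial>eta)"

text \<open>Uniformly alpha-Hoelder continuous measure: eta(I) <= K |I|^alpha for all intervals I
  (it suffices to take closed intervals of positive length).\<close>
definition unif_hoelder :: "real \<Rightarrow> real measure \<Rightarrow> bool" where
  "unif_hoelder \<alpha> eta \<longleftrightarrow>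
     (\<exists>K. \<forall>a b. a < b \<longrightarrow> emeasure eta {a..b} \<le> ennreal (K * (b - a) powr \<alpha>))"

definition average_measure :: "(real \<Rightarrow> real measure) \<Rightarrow> real measure \<Rightarrow> real measure" where
  "average_measure mu nu =
     measure_of UNIV (sets borel) (\<lambda>B. \<integral>\<^sup>+l. emeasure (mu l) B \<partial>nu)"

end

theory Submission
  imports Defs "HOL-Probability.Probability" "HOL-Complex_Analysis.Complex_Analysis"
begin
locale rk1 =
  fixes A :: "'a::real_inner \<Rightarrow> 'a" and \<phi> :: 'a and mu :: "real \<Rightarrow> real measure" and B :: real
  assumes lin: "bounded_linear A"
    and Bnd: "\<And>x. norm (A x) \<le> B * norm x" and B0: "0 \<le> B"
    and phi: "norm \<phi> = 1"
    and mu: "\<And>l. spectral_measure (rank_one_pert A \<phi> l) \<phi> (mu l)"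
begin

definition mom :: "real \<Rightarrow> nat \<Rightarrow> real" where
  "mom l n = inner \<phi> ((rank_one_pert A \<phi> l ^^ n) \<phi>)"

lemma pert0: "rank_one_pert A \<phi> 0 = A"
  by (auto simp: rank_one_pert_def fun_eq_iff)

lemma A_sum: "A (\<Sum>k\<in>S. f k) = (\<Sum>k\<in>S. A (f k))"
  using bounded_linear.linear[OF lin] by (rule real_vector.linear_sum)

lemma A_add: "A (x + y) = A x + A y"
  using bounded_linear.linear[OF lin] by (rule real_vector.linear_add)

lemma A_scale: "A (c *\<^sub>R x) = c *\<^sub>R A x"
  using lin by (rule linear_simps(5))

lemma pert_pow:
  "(rank_one_pert A \<phi> l ^^ n) \<phi> = (A ^^ n) \<phi> + (\<Sum>k<n. (l * mom l k) *\<^sub>R (A ^^ (n - 1 - k)) \<phi>)"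
proof (induction n)
  case 0
  then show ?case by simp
next
  case (Suc n)
  have "(rank_one_pert A \<phi> l ^^ Suc n) \<phi> = rank_one_pert A \<phi> l ((rank_one_pert A \<phi> l ^^ n) \<phi>)"
    by simp
  also have "\<dots> = A ((rank_one_pert A \<phi> l ^^ n) \<phi>) + (l * mom l n) *\<^sub>R \<phi>"
    by (simp add: rank_one_pert_def mom_def)
  also have "A ((rank_one_pert A \<phi> l ^^ n) \<phi>) = (A ^^ Suc n) \<phi> + (\<Sum>k<n. (l * mom l k) *\<^sub>R (A ^^ (n - k)) \<phi>)"
  proof -
    have "\<And>k. k < n \<Longrightarrow> A ((A ^^ (n - 1 - k)) \<phi>) = (A ^^ (n - k)) \<phi>"
    proof -
      fix k assume "k < n"
      then have "n - k = Suc (n - 1 - k)" by simp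
      then show "A ((A ^^ (n - 1 - k)) \<phi>) = (A ^^ (n - k)) \<phi>" by simp
    qed
    then show ?thesis
      by (simp add: Suc.IH A_add A_sum A_scale)
  qed
  finally show ?case
    by (simp add: add.assoc)
qed

lemma mom_rec:
  "mom l n = mom 0 n + l * (\<Sum>k<n. mom l k * mom 0 (n - 1 - k))"
proof -
  have "mom l n = inner \<phi> ((A ^^ n) \<phi>) + (\<Sum>k<n. (l * mom l k) * inner \<phi> ((A ^^ (n - 1 - k)) \<phi>))"
    unfolding mom_def[of l n] pert_pow by (simp add: inner_sum_right inner_add_right)
  then show ?thesis
    by (simp add: mom_def pert0 sum_distrib_left mult.assoc)
qed

lemma pert_norm: "norm (rank_one_pert A \<phi> l x) \<le> (B + \<bar>l\<bar>) * norm x"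
proof -
  have "norm (rank_one_pert A \<phi> l x) \<le> norm (A x) + \<bar>l\<bar> * \<bar>inner \<phi> x\<bar> * norm \<phi>"
    unfolding rank_one_pert_def
    by (metis (no_types, opaque_lifting) abs_mult norm_scaleR norm_triangle_ineq)
  also have "\<dots> \<le> B * norm x + \<bar>l\<bar> * norm x"
    using Bnd[of x] Cauchy_Schwarz_ineq2[of \<phi> x] phi
    by (intro add_mono) (auto intro!: mult_left_mono)
  finally show ?thesis by (simp add: algebra_simps)
qed

lemma pert_pow_norm: "norm ((rank_one_pert A \<phi> l ^^ n) \<phi>) \<le> (B + \<bar>l\<bar>) ^ n"
proof (induction n)
  case 0
  then show ?case using phi by simp
next
  case (Suc n)
  have "norm ((rank_one_pert A \<phi> l ^^ Suc n) \<phi>) \<le> (B + \<bar>l\<bar>) * norm ((rank_one_pert A \<phi> l ^^ n) \<phi>)"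
    using pert_norm by simp
  also have "\<dots> \<le> (B + \<bar>l\<bar>) * (B + \<bar>l\<bar>) ^ n"
    using Suc B0 by (intro mult_left_mono) auto
  finally show ?case by simp
qed

lemma mom_bound: "\<bar>mom l n\<bar> \<le> (B + \<bar>l\<bar>) ^ n"
  using Cauchy_Schwarz_ineq2[of \<phi> "(rank_one_pert A \<phi> l ^^ n) \<phi>"] pert_pow_norm phi
  unfolding mom_def by (metis mult_1 order_trans)

lemma mom_0: "mom l 0 = 1"
  using phi by (simp add: mom_def dot_square_norm)

lemma mom_cont: "continuous_on UNIV (\<lambda>l. mom l n)"
proof (induction n rule: less_induct)
  case (less n)
  have "continuous_on UNIV (\<lambda>l. mom 0 n + l * (\<Sum>k<n. mom l k * mom 0 (n - 1 - k)))"
    using less by (intro continuous_intros) auto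
  then show ?case
    by (subst mom_rec) simp
qed

end

context rk1 begin

lemma sets_mu[measurable_cong, simp]: "sets (mu l) = sets borel"
  using mu[of l] by (simp add: spectral_measure_def)

lemma space_mu[simp]: "space (mu l) = UNIV"
  using sets_eq_imp_space_eq[OF sets_mu[of l]] by simp

lemma fin_mu: "finite_measure (mu l)"
  using mu[of l] by (simp add: spectral_measure_def)

lemma int_pow: "integrable (mu l) (\<lambda>x. x ^ n)"
  using mu[of l] by (simp add: spectral_measure_def)

lemma mom_int: "(\<integral>x. x ^ n \<partial>mu l) = mom l n"
  using mu[of l] by (simp add: spectral_measure_def mom_def)

lemma prob_mu: "prob_space (mu l)"
proof (rule prob_spaceI)
  have "(\<integral>x. x ^ 0 \<partial>mu l) = 1" using mom_int[of l 0] mom_0 by simp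
  then have "measure (mu l) (space (mu l)) = 1" by simp
  then show "emeasure (mu l) (space (mu l)) = 1"
    using finite_measure.emeasure_eq_measure[OF fin_mu] by simp
qed

lemma support: "AE y in mu l. \<bar>y\<bar> \<le> B + \<bar>l\<bar> + 1"
proof -
  define r where "r = B + \<bar>l\<bar>"
  define R where "R = r + 1"
  define S where "S = {y::real. R < \<bar>y\<bar>}"
  have r0: "0 \<le> r" using B0 by (simp add: r_def)
  have S[measurable]: "S \<in> sets borel" unfolding S_def by measurable
  interpret finite_measure "mu l" by (rule fin_mu)
  have bound: "measure (mu l) S \<le> ((r / R)^2) ^ n" for n
  proof -
    have "(\<integral>y. R ^ (2*n) * indicator S y \<partial>mu l) \<le> (\<integral>y. y ^ (2*n) \<partial>mu l)"
    proof (rule integral_mono)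
      show "integrable (mu l) (\<lambda>y. R ^ (2*n) * indicator S y)"
        by (intro integrable_const_bound[where B="\<bar>R ^ (2*n)\<bar>"]) (auto simp: indicator_def)
      show "integrable (mu l) (\<lambda>y. y ^ (2*n))" by (rule int_pow)
      fix y
      show "R ^ (2*n) * indicator S y \<le> y ^ (2*n)"
      proof (cases "y \<in> S")
        case True
        then have "R \<le> \<bar>y\<bar>" by (simp add: S_def)
        then have "R ^ (2*n) \<le> \<bar>y\<bar> ^ (2*n)" using r0 by (intro power_mono) (auto simp: R_def)
        then show ?thesis using True by (simp add: power_even_abs)
      next
        case False
        then show ?thesis by (simp add: power_mult)
      qed
    qed
    also have "\<dots> = mom l (2*n)" by (rule mom_int)
    also have "\<dots> \<le> r ^ (2*n)" using mom_bound[of l "2*n"] by (simp add: r_def)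
    finally have "R ^ (2*n) * measure (mu l) S \<le> r ^ (2*n)"
      by (simp add: emeasure_eq_measure)
    moreover have "R > 0" using r0 by (simp add: R_def)
    ultimately have "measure (mu l) S \<le> r ^ (2*n) / R ^ (2*n)"
      by (simp add: field_simps)
    then show ?thesis by (simp add: power_divide power_mult)
  qed
  have q: "(\<lambda>n. ((r / R)^2) ^ n) \<longlonglongrightarrow> 0"
    using r0 by (intro LIMSEQ_power_zero) (auto simp: R_def abs_square_less_1 divide_less_eq)
  have "measure (mu l) S \<le> 0"
    using bound by (intro LIMSEQ_le_const[OF q]) auto
  then have "emeasure (mu l) S = 0"
    using measure_nonneg[of "mu l" S] by (simp add: emeasure_eq_measure)
  then have "S \<in> null_sets (mu l)" by auto
  then show ?thesis
    by (rule AE_I') (auto simp: S_def R_def r_def)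
qed

end

lemma prob_int_bound:
  fixes g :: "real \<Rightarrow> 'b::{banach, second_countable_topology}"
  assumes P: "prob_space M" and g: "g \<in> borel_measurable M" and b: "AE x in M. norm (g x) \<le> c"
  shows "integrable M g" "norm (integral\<^sup>L M g) \<le> c"
proof -
  interpret prob_space M by (rule P)
  show int: "integrable M g"
    using b g by (rule integrable_const_bound)
  have "norm (integral\<^sup>L M g) \<le> (\<integral>x. norm (g x) \<partial>M)" by (rule integral_norm_bound)
  also have "\<dots> \<le> (\<integral>x. c \<partial>M)"
    using int b by (intro integral_mono_AE) auto
  also have "\<dots> = c" by (simp add: prob_space)
  finally show "norm (integral\<^sup>L M g) \<le> c" .
qed

context rk1 begin

lemma F_series:
  assumes z: "B + \<bar>l\<bar> + 1 < norm z"
  shows "(\<lambda>n. complex_of_real (mom l n) / z ^ Suc n) sums (- borel_transform (mu l) z)"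
proof -
  define R where "R = B + \<bar>l\<bar> + 1"
  have R0: "0 < R" using B0 by (simp add: R_def)
  have zR: "R < norm z" using z by (simp add: R_def)
  then have z0: "z \<noteq> 0" using R0 by auto
  define s where "s N y = (\<Sum>n<N. (complex_of_real y) ^ n / z ^ Suc n)" for N y
  define q where "q = R / norm z"
  have q0: "0 \<le> q" and q1: "q < 1" using R0 zR by (auto simp: q_def divide_less_eq)
  interpret prob_space "mu l" by (rule prob_mu)
  have lim: "AE y in mu l. (\<lambda>N. s N y) \<longlonglongrightarrow> 1 / (z - complex_of_real y)"
    using support[of l]
  proof eventually_elim
    fix y :: real assume y: "\<bar>y\<bar> \<le> B + \<bar>l\<bar> + 1"
    have n1: "norm (complex_of_real y / z) < 1"
      using y zR by (simp add: norm_divide R_def divide_less_eq)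
    then have "(\<lambda>n. (1 / z) * (complex_of_real y / z) ^ n) sums ((1/z) * (1 / (1 - complex_of_real y / z)))"
      by (intro sums_mult geometric_sums)
    moreover have "\<And>n. (1 / z) * (complex_of_real y / z) ^ n = (complex_of_real y) ^ n / z ^ Suc n"
      by (simp add: power_divide)
    moreover have "(1/z) * (1 / (1 - complex_of_real y / z)) = 1 / (z - complex_of_real y)"
    proof -
      have "z - complex_of_real y \<noteq> 0"
        using n1 z0 by (metis divide_self norm_one order_less_irrefl right_minus_eq)
      then show ?thesis using z0 by (simp add: field_simps)
    qed
    ultimately show "(\<lambda>N. s N y) \<longlonglongrightarrow> 1 / (z - complex_of_real y)"
      by (simp add: s_def sums_def)
  qed
  have bnd: "AE y in mu l. norm (s N y) \<le> 1 / (norm z - R)" for N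
    using support[of l]
  proof eventually_elim
    fix y :: real assume y: "\<bar>y\<bar> \<le> B + \<bar>l\<bar> + 1"
    have "norm (s N y) \<le> (\<Sum>n<N. norm ((complex_of_real y) ^ n / z ^ Suc n))"
      unfolding s_def by (rule norm_sum)
    also have "\<dots> \<le> (\<Sum>n<N. (1 / norm z) * q ^ n)"
    proof (rule sum_mono)
      fix n
      have "norm ((complex_of_real y) ^ n / z ^ Suc n) = \<bar>y\<bar> ^ n / norm z ^ Suc n"
        by (simp add: norm_divide norm_power norm_mult)
      also have "\<dots> \<le> R ^ n / norm z ^ Suc n"
        using y by (intro divide_right_mono power_mono) (auto simp: R_def)
      also have "\<dots> = (1 / norm z) * q ^ n"
        by (simp add: q_def power_divide)
      finally show "norm ((complex_of_real y) ^ n / z ^ Suc n) \<le> (1 / norm z) * q ^ n" .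
    qed
    also have "\<dots> \<le> (\<Sum>n. (1 / norm z) * q ^ n)"
      using q0 q1 by (intro sum_le_suminf summable_mult summable_geometric) auto
    also have "\<dots> = (1 / norm z) * (1 / (1 - q))"
      using q0 q1 by (intro sums_unique[symmetric] sums_mult geometric_sums) auto
    also have "\<dots> = 1 / (norm z - R)"
      using zR R0 z0 by (simp add: q_def field_simps)
    finally show "norm (s N y) \<le> 1 / (norm z - R)" .
  qed
  have "(\<lambda>N. integral\<^sup>L (mu l) (s N)) \<longlonglongrightarrow> integral\<^sup>L (mu l) (\<lambda>y. 1 / (z - complex_of_real y))"
  proof (rule integral_dominated_convergence[OF _ _ _ lim bnd])
    show "(\<lambda>y. 1 / (z - complex_of_real y)) \<in> borel_measurable (mu l)" by measurable
    show "s i \<in> borel_measurable (mu l)" for i unfolding s_def by measurable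
    show "integrable (mu l) (\<lambda>x. 1 / (norm z - R))" by simp
  qed
  moreover have "integral\<^sup>L (mu l) (s N) = (\<Sum>n<N. complex_of_real (mom l n) / z ^ Suc n)" for N
  proof -
    have "integral\<^sup>L (mu l) (s N) = (\<Sum>n<N. \<integral>y. complex_of_real (y ^ n) / z ^ Suc n \<partial>mu l)"
      unfolding s_def
      by (subst Bochner_Integration.integral_sum)
         (auto simp del: of_real_power simp add: of_real_power[symmetric] intro!: integrable_divide integrable_of_real int_pow)
    also have "\<dots> = (\<Sum>n<N. complex_of_real (mom l n) / z ^ Suc n)"
      by (simp del: of_real_power add: integral_complex_of_real mom_int)
    finally show ?thesis .
  qed
  moreover have "integral\<^sup>L (mu l) (\<lambda>y. 1 / (z - complex_of_real y)) = - borel_transform (mu l) z"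
  proof -
    have eq: "\<And>y. 1 / (complex_of_real y - z) = - (1 / (z - complex_of_real y))"
      by (metis minus_diff_eq divide_minus_right)
    have "borel_transform (mu l) z = (\<integral>y. - (1 / (z - complex_of_real y)) \<partial>mu l)"
      unfolding borel_transform_def eq by simp
    then show ?thesis by simp
  qed
  ultimately show ?thesis by (simp add: sums_def)
qed

end

context rk1 begin

lemma F_ident_large:
  assumes z: "B + \<bar>l\<bar> + 1 < norm z"
  shows "borel_transform (mu l) z * (1 + l * borel_transform (mu 0) z) = borel_transform (mu 0) z"
proof -
  have z0: "z \<noteq> 0" using z B0 by auto
  define w where "w = 1 / z"
  define a where "a n = complex_of_real (mom l n) * w ^ n" for n
  define b where "b n = complex_of_real (mom 0 n) * w ^ n" for n
  define q where "q = (B + \<bar>l\<bar>) * norm w"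
  have q0: "0 \<le> q" using B0 by (simp add: q_def)
  have q1: "q < 1"
  proof -
    have "q = (B + \<bar>l\<bar>) / norm z" by (simp add: q_def w_def norm_divide)
    also have "\<dots> < 1" using z z0 by (simp add: divide_less_eq)
    finally show ?thesis .
  qed
  have na: "norm (a n) \<le> q ^ n" for n
  proof -
    have "norm (a n) = \<bar>mom l n\<bar> * norm w ^ n" by (simp add: a_def norm_mult norm_power)
    also have "\<dots> \<le> (B + \<bar>l\<bar>) ^ n * norm w ^ n"
      by (intro mult_right_mono mom_bound) auto
    finally show ?thesis by (simp add: q_def power_mult_distrib)
  qed
  have nb: "norm (b n) \<le> q ^ n" for n
  proof -
    have "norm (b n) = \<bar>mom 0 n\<bar> * norm w ^ n" by (simp add: b_def norm_mult norm_power)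
    also have "\<dots> \<le> (B + \<bar>l\<bar>) ^ n * norm w ^ n"
      using mom_bound[of 0 n] B0
      by (intro mult_right_mono) (auto intro: order_trans[OF _ power_mono[of B "B + \<bar>l\<bar>"]])
    finally show ?thesis by (simp add: q_def power_mult_distrib)
  qed
  have sa: "summable (\<lambda>n. norm (a n))"
    using na q0 q1 by (intro summable_comparison_test[OF _ summable_geometric[of q]]) auto
  have sb: "summable (\<lambda>n. norm (b n))"
    using nb q0 q1 by (intro summable_comparison_test[OF _ summable_geometric[of q]]) auto
  have sa': "summable a" using sa summable_norm_cancel by blast
  have sb': "summable b" using sb summable_norm_cancel by blast
  have Fl: "borel_transform (mu l) z = - w * suminf a"
  proof -
    have "(\<lambda>n. w * a n) sums (w * suminf a)" using sa' by (intro sums_mult summable_sums)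
    moreover have "(\<lambda>n. w * a n) = (\<lambda>n. complex_of_real (mom l n) / z ^ Suc n)"
      by (auto simp: a_def w_def power_divide fun_eq_iff)
    ultimately have "(\<lambda>n. complex_of_real (mom l n) / z ^ Suc n) sums (w * suminf a)" by simp
    with F_series[OF z] have "- borel_transform (mu l) z = w * suminf a"
      using sums_unique2 by blast
    then show ?thesis by (metis minus_minus mult_minus_left)
  qed
  have F0: "borel_transform (mu 0) z = - w * suminf b"
  proof -
    have z': "B + \<bar>0\<bar> + 1 < norm z" using z by simp
    have "(\<lambda>n. w * b n) sums (w * suminf b)" using sb' by (intro sums_mult summable_sums)
    moreover have "(\<lambda>n. w * b n) = (\<lambda>n. complex_of_real (mom 0 n) / z ^ Suc n)"
      by (auto simp: b_def w_def power_divide fun_eq_iff)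
    ultimately have "(\<lambda>n. complex_of_real (mom 0 n) / z ^ Suc n) sums (w * suminf b)" by simp
    with F_series[OF z'] have "- borel_transform (mu 0) z = w * suminf b"
      using sums_unique2 by blast
    then show ?thesis by (metis minus_minus mult_minus_left)
  qed
  define c where "c n = (\<Sum>k<n. a k * b (n - 1 - k))" for n
  have rec: "a n = b n + (l * w) * c n" for n
  proof -
    have "a n = complex_of_real (mom 0 n + l * (\<Sum>k<n. mom l k * mom 0 (n - 1 - k))) * w ^ n"
      unfolding a_def by (subst mom_rec) simp
    also have "\<dots> = b n + l * (\<Sum>k<n. complex_of_real (mom l k) * complex_of_real (mom 0 (n - 1 - k)) * w ^ n)"
      by (simp add: b_def algebra_simps sum_distrib_left)
    also have "(\<Sum>k<n. complex_of_real (mom l k) * complex_of_real (mom 0 (n - 1 - k)) * w ^ n)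
       = w * c n"
      unfolding c_def sum_distrib_left
    proof (rule sum.cong)
      fix k assume "k \<in> {..<n}"
      then have "w ^ n = w * (w ^ k * w ^ (n - 1 - k))"
        by (simp flip: power_add power_Suc)
      then show "complex_of_real (mom l k) * complex_of_real (mom 0 (n - 1 - k)) * w ^ n = w * (a k * b (n - 1 - k))"
        by (simp add: a_def b_def)
    qed simp
    finally show ?thesis by (simp add: algebra_simps)
  qed
  have cS: "c (Suc n) = (\<Sum>i\<le>n. a i * b (n - i))" for n
    by (simp add: c_def lessThan_Suc_atMost)
  have "(\<lambda>n. c (Suc n)) sums (suminf a * suminf b)"
    unfolding cS using Cauchy_product_sums[OF sa sb] .
  moreover have "c 0 = 0" by (simp add: c_def)
  ultimately have "c sums (suminf a * suminf b)"
    by (metis add.right_neutral sums_Suc_iff)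
  then have "(\<lambda>n. b n + (l * w) * c n) sums (suminf b + (l * w) * (suminf a * suminf b))"
    by (intro sums_add summable_sums[OF sb'] sums_mult)
  moreover have "a = (\<lambda>n. b n + (l * w) * c n)" using rec by (simp add: fun_eq_iff)
  ultimately have "a sums (suminf b + (l * w) * (suminf a * suminf b))"
    by simp
  then have eq: "suminf a = suminf b + (l * w) * (suminf a * suminf b)"
    by (rule sums_unique[symmetric])
  have eq2: "suminf a - (l * w) * (suminf a * suminf b) = suminf b"
    using eq by (simp add: algebra_simps)
  have "- w * suminf a * (1 + l * (- w * suminf b)) = - w * (suminf a - (l * w) * (suminf a * suminf b))"
    by (simp add: algebra_simps)
  also have "\<dots> = - w * suminf b" by (simp only: eq2)
  finally show ?thesis
    unfolding Fl F0 .
qed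

end

lemma norm_ge_Im: "Im z \<le> norm (complex_of_real y - z)"
proof -
  have "\<bar>Im (complex_of_real y - z)\<bar> \<le> norm (complex_of_real y - z)" by (rule abs_Im_le_cmod)
  then show ?thesis by simp
qed

lemma alg_id:
  fixes a b :: complex
  assumes "a \<noteq> 0" "b \<noteq> 0"
  shows "1 / a - 1 / b - (b - a) * (1 / b^2) = (b - a)^2 / (a * b^2)"
  using assms by (simp add: field_simps power2_eq_square)

lemma bt_deriv:
  assumes P: "prob_space M" and S: "sets M = sets borel" and w: "0 < Im w"
  shows "(borel_transform M has_field_derivative (\<integral>y. 1 / (complex_of_real y - w)^2 \<partial>M)) (at w)"
proof -
  interpret prob_space M by (rule P)
  have [measurable_cong]: "sets M = sets borel" by (rule S)
  define e where "e = Im w"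
  have e0: "0 < e" using w by (simp add: e_def)
  define D where "D = (\<integral>y. 1 / (complex_of_real y - w)^2 \<partial>M)"
  have intg: "integrable M (\<lambda>y. 1 / (complex_of_real y - z))" if "0 < Im z" for z
  proof (rule prob_int_bound(1)[OF P])
    show "(\<lambda>y. 1 / (complex_of_real y - z)) \<in> borel_measurable M" by measurable
    show "AE y in M. norm (1 / (complex_of_real y - z)) \<le> 1 / Im z"
      using norm_ge_Im[of z] that by (auto simp: norm_divide intro!: frac_le)
  qed
  have intD: "integrable M (\<lambda>y. 1 / (complex_of_real y - w)^2)"
  proof (rule prob_int_bound(1)[OF P])
    show "(\<lambda>y. 1 / (complex_of_real y - w)^2) \<in> borel_measurable M" by measurable
    show "AE y in M. norm (1 / (complex_of_real y - w)^2) \<le> 1 / (Im w)^2"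
      using norm_ge_Im[of w] w by (auto simp: norm_divide norm_power intro!: frac_le power_mono)
  qed
  have key: "norm ((borel_transform M z - borel_transform M w) / (z - w) - D) \<le> (2 / e^3) * norm (z - w)"
    if zw: "z \<noteq> w" and d: "dist z w < e / 2" for z
  proof -
    have "\<bar>Im z - Im w\<bar> \<le> norm (z - w)" using abs_Im_le_cmod[of "z - w"] by simp
    then have ez: "e / 2 < Im z" using d by (simp add: dist_norm e_def)
    then have z0: "0 < Im z" using e0 by simp
    define g where "g y = 1 / (complex_of_real y - z) - 1 / (complex_of_real y - w) - (z - w) * (1 / (complex_of_real y - w)^2)" for y
    have s1: "integral\<^sup>L M g = integral\<^sup>L M (\<lambda>y. 1 / (complex_of_real y - z) - 1 / (complex_of_real y - w))
        - integral\<^sup>L M (\<lambda>y. (z - w) * (1 / (complex_of_real y - w)^2))"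
      unfolding g_def
      by (rule Bochner_Integration.integral_diff)
         (auto simp del: times_divide_eq_right intro: Bochner_Integration.integrable_diff intg[OF z0] intg[OF w] integrable_mult_right intD)
    have s2: "integral\<^sup>L M (\<lambda>y. 1 / (complex_of_real y - z) - 1 / (complex_of_real y - w))
        = borel_transform M z - borel_transform M w"
      unfolding borel_transform_def by (rule Bochner_Integration.integral_diff[OF intg[OF z0] intg[OF w]])
    have s3: "integral\<^sup>L M (\<lambda>y. (z - w) * (1 / (complex_of_real y - w)^2)) = (z - w) * D"
      unfolding D_def by (rule integral_mult_right_zero)
    have "borel_transform M z - borel_transform M w - (z - w) * D = integral\<^sup>L M g"
      unfolding s1 s2 s3 ..
    moreover have "norm (integral\<^sup>L M g) \<le> (2 / e^3) * (norm (z - w))^2"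
    proof (rule prob_int_bound(2)[OF P])
      show "g \<in> borel_measurable M" unfolding g_def by measurable
      show "AE y in M. norm (g y) \<le> (2 / e^3) * (norm (z - w))^2"
      proof (rule AE_I2)
        fix y
        have n1: "e / 2 \<le> norm (complex_of_real y - z)" using norm_ge_Im[of z y] ez by simp
        have n2: "e \<le> norm (complex_of_real y - w)" using norm_ge_Im[of w y] by (simp add: e_def)
        have a1: "complex_of_real y - z \<noteq> 0" using n1 e0 by auto
        have a2: "complex_of_real y - w \<noteq> 0" using n2 e0 by auto
        have zw': "z - w = (complex_of_real y - w) - (complex_of_real y - z)" by simp
        have "g y = (z - w)^2 / ((complex_of_real y - z) * (complex_of_real y - w)^2)"
          unfolding g_def zw' using a1 a2 by (rule alg_id)
        then have "norm (g y) = (norm (z - w))^2 / (norm (complex_of_real y - z) * (norm (complex_of_real y - w))^2)"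
          by (simp add: norm_divide norm_mult norm_power)
        also have "\<dots> \<le> (norm (z - w))^2 / ((e / 2) * e^2)"
          using n1 n2 e0 a1 a2 by (intro divide_left_mono mult_mono power_mono) (auto intro!: mult_pos_pos)
        also have "\<dots> = (2 / e^3) * (norm (z - w))^2"
          by (simp add: field_simps power2_eq_square power3_eq_cube)
        finally show "norm (g y) \<le> (2 / e^3) * (norm (z - w))^2" .
      qed
    qed
    ultimately have "norm (borel_transform M z - borel_transform M w - (z - w) * D) \<le> (2 / e^3) * (norm (z - w))^2"
      by simp
    moreover have "(borel_transform M z - borel_transform M w) / (z - w) - D
        = (borel_transform M z - borel_transform M w - (z - w) * D) / (z - w)"
      using zw by (simp add: field_simps)
    ultimately show ?thesis
      using zw by (simp add: norm_divide divide_le_eq power2_eq_square mult.assoc)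
  qed
  have "((\<lambda>z. (borel_transform M z - borel_transform M w) / (z - w) - D) \<longlongrightarrow> 0) (at w)"
  proof (rule Lim_null_comparison)
    show "\<forall>\<^sub>F z in at w. norm ((borel_transform M z - borel_transform M w) / (z - w) - D) \<le> (2 / e^3) * norm (z - w)"
      unfolding eventually_at using e0 key by (intro exI[of _ "e / 2"]) auto
    have "((\<lambda>z. norm (z - w)) \<longlongrightarrow> 0) (at w)"
      by (intro tendsto_norm_zero LIM_zero tendsto_ident_at)
    then show "((\<lambda>z. (2 / e^3) * norm (z - w)) \<longlongrightarrow> 0) (at w)"
      by (rule tendsto_mult_right_zero)
  qed
  then show ?thesis
    unfolding D_def[symmetric] has_field_derivative_iff LIM_zero_iff .
qed

lemma bt_holo:
  assumes P: "prob_space M" and S: "sets M = sets borel"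
  shows "borel_transform M holomorphic_on {z. 0 < Im z}"
  using bt_deriv[OF P S] by (subst holomorphic_on_open) (auto simp: open_halfspace_Im_gt)

context rk1 begin

lemma F_ident:
  assumes z: "0 < Im z"
  shows "borel_transform (mu l) z * (1 + l * borel_transform (mu 0) z) = borel_transform (mu 0) z"
proof -
  define f where "f z = borel_transform (mu l) z * (1 + l * borel_transform (mu 0) z) - borel_transform (mu 0) z" for z
  define R where "R = B + \<bar>l\<bar> + 1"
  define U where "U = {z. 0 < Im z} \<inter> - cball 0 R"
  have R0: "0 < R" using B0 by (simp add: R_def)
  have "f z = 0"
  proof (rule analytic_continuation[of f "{z. 0 < Im z}" U "\<i> * complex_of_real (R + 1)"])
    show "f holomorphic_on {z. 0 < Im z}"
      unfolding f_def using bt_holo[OF prob_mu sets_mu] by (intro holomorphic_intros) auto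
    show "open {z. 0 < Im z}" by (rule open_halfspace_Im_gt)
    show "connected {z. 0 < Im z}" by (intro convex_connected convex_halfspace_Im_gt)
    show "U \<subseteq> {z. 0 < Im z}" by (auto simp: U_def)
    show "\<i> * complex_of_real (R + 1) \<in> {z. 0 < Im z}" using R0 by simp
    have oU: "open U" unfolding U_def by (intro open_Int open_halfspace_Im_gt open_Compl closed_cball)
    have "\<i> * complex_of_real (R + 1) \<in> U" using R0 by (simp add: U_def norm_mult)
    then show "\<i> * complex_of_real (R + 1) islimpt U"
      using oU by (intro interior_limit_point) (auto simp: interior_open)
    show "f z = 0" if "z \<in> U" for z
    proof -
      have "B + \<bar>l\<bar> + 1 < norm z" using that by (simp add: U_def R_def)
      then show ?thesis unfolding f_def using F_ident_large by simp
    qed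
    show "z \<in> {z. 0 < Im z}" using z by simp
  qed
  then show ?thesis by (simp add: f_def)
qed

lemma ImF:
  assumes z: "0 < Im z"
  shows "Im (borel_transform (mu l) z) = (\<integral>y. Im z / ((y - Re z)^2 + (Im z)^2) \<partial>mu l)"
proof -
  have "integrable (mu l) (\<lambda>y. 1 / (complex_of_real y - z))"
  proof (rule prob_int_bound(1)[OF prob_mu])
    show "(\<lambda>y. 1 / (complex_of_real y - z)) \<in> borel_measurable (mu l)" by measurable
    show "AE y in mu l. norm (1 / (complex_of_real y - z)) \<le> 1 / Im z"
      using norm_ge_Im[of z] z by (auto simp: norm_divide intro!: frac_le)
  qed
  then have "Im (borel_transform (mu l) z) = (\<integral>y. Im (1 / (complex_of_real y - z)) \<partial>mu l)"
    unfolding borel_transform_def by (simp add: integral_Im)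
  also have "\<dots> = (\<integral>y. Im z / ((y - Re z)^2 + (Im z)^2) \<partial>mu l)"
    by (intro Bochner_Integration.integral_cong) (auto simp: Im_divide power2_eq_square algebra_simps)
  finally show ?thesis .
qed

lemma kern_int:
  assumes z: "0 < Im z"
  shows "integrable (mu l) (\<lambda>y. Im z / ((y - Re z)^2 + (Im z)^2))"
proof (rule prob_int_bound(1)[OF prob_mu])
  show "(\<lambda>y. Im z / ((y - Re z)^2 + (Im z)^2)) \<in> borel_measurable (mu l)" by measurable
  show "AE y in mu l. norm (Im z / ((y - Re z)^2 + (Im z)^2)) \<le> 1 / Im z"
  proof (rule AE_I2)
    fix y
    have "(Im z)^2 \<le> (y - Re z)^2 + (Im z)^2" by simp
    then have "Im z / ((y - Re z)^2 + (Im z)^2) \<le> Im z / (Im z)^2"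
      using z by (intro divide_left_mono) (auto intro!: mult_pos_pos add_nonneg_pos)
    then show "norm (Im z / ((y - Re z)^2 + (Im z)^2)) \<le> 1 / Im z"
      using z by (simp add: power2_eq_square)
  qed
qed

lemma poisson_eq:
  assumes z: "0 < Im z"
  shows "poisson_transform (mu l) z = ennreal (Im (borel_transform (mu l) z))"
  unfolding poisson_transform_def ImF[OF z]
  using z by (intro nn_integral_eq_integral kern_int) auto

lemma ImF_pos:
  assumes z: "0 < Im z"
  shows "0 < Im (borel_transform (mu l) z)"
proof -
  interpret prob_space "mu l" by (rule prob_mu)
  define c where "c = Im z / ((B + \<bar>l\<bar> + 1 + \<bar>Re z\<bar>)^2 + (Im z)^2)"
  have c0: "0 < c" using z unfolding c_def by (intro divide_pos_pos add_nonneg_pos) auto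
  have "(\<integral>y. c \<partial>mu l) \<le> (\<integral>y. Im z / ((y - Re z)^2 + (Im z)^2) \<partial>mu l)"
  proof (rule integral_mono_AE)
    show "integrable (mu l) (\<lambda>y. c)" by simp
    show "integrable (mu l) (\<lambda>y. Im z / ((y - Re z)^2 + (Im z)^2))" by (rule kern_int[OF z])
    show "AE y in mu l. c \<le> Im z / ((y - Re z)^2 + (Im z)^2)"
      using support[of l]
    proof eventually_elim
      fix y assume y: "\<bar>y\<bar> \<le> B + \<bar>l\<bar> + 1"
      have "\<bar>y - Re z\<bar> \<le> B + \<bar>l\<bar> + 1 + \<bar>Re z\<bar>" using y by linarith
      then have "(y - Re z)^2 \<le> (B + \<bar>l\<bar> + 1 + \<bar>Re z\<bar>)^2"
        by (metis abs_le_square_iff abs_of_nonneg add_nonneg_nonneg abs_ge_zero B0 abs_ge_zero zero_le_one)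
      then show "c \<le> Im z / ((y - Re z)^2 + (Im z)^2)"
        unfolding c_def using z by (intro divide_left_mono) (auto intro!: mult_pos_pos add_nonneg_pos)
    qed
  qed
  moreover have "prob UNIV = 1" using prob_space by simp
  ultimately show ?thesis using c0 ImF[OF z] by simp
qed

end

context rk1 begin

lemma poly_int:
  "(\<integral>y. (\<Sum>i\<le>n. a i * y ^ i) \<partial>mu l) = (\<Sum>i\<le>n. a i * mom l i)"
  by (subst Bochner_Integration.integral_sum) (auto intro: int_pow simp: mom_int)

lemma poly_integrable: "integrable (mu l) (\<lambda>y. \<Sum>i\<le>n. a i * y ^ i)"
  by (auto intro!: Bochner_Integration.integrable_sum int_pow)

lemma cont_meas:
  fixes f :: "real \<Rightarrow> real"
  assumes cf: "continuous_on UNIV f" and fb: "\<And>y. \<bar>f y\<bar> \<le> 1"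
  shows "(\<lambda>l. \<integral>y. f y \<partial>mu l) \<in> borel_measurable borel"
proof -
  have fm[measurable]: "f \<in> borel_measurable borel" by (rule borel_measurable_continuous_onI[OF cf])
  define Rj where "Rj j = B + real j + 1" for j :: nat
  have "\<forall>j. \<exists>p. real_polynomial_function p \<and> (\<forall>x\<in>{- Rj j .. Rj j}. \<bar>f x - p x\<bar> < 1 / real (Suc j))"
  proof
    fix j
    obtain p where "real_polynomial_function p" "\<And>x. x \<in> {- Rj j .. Rj j} \<Longrightarrow> \<bar>f x - p x\<bar> < 1 / real (Suc j)"
      using Stone_Weierstrass_real_polynomial_function[of "{- Rj j .. Rj j}" f "1 / real (Suc j)"]
        continuous_on_subset[OF cf] by auto
    then show "\<exists>p. real_polynomial_function p \<and> (\<forall>x\<in>{- Rj j .. Rj j}. \<bar>f x - p x\<bar> < 1 / real (Suc j))"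
      by blast
  qed
  then obtain P where P: "\<And>j. real_polynomial_function (P j)"
    and Pa: "\<And>j x. x \<in> {- Rj j .. Rj j} \<Longrightarrow> \<bar>f x - P j x\<bar> < 1 / real (Suc j)"
    by metis
  have Ps: "\<exists>a n. P j = (\<lambda>x. \<Sum>i\<le>n. a i * x ^ i)" for j
    using P[of j] real_polynomial_function_iff_sum by blast
  have Pint: "integrable (mu l) (P j)" for j l
    using Ps[of j] poly_integrable by auto
  have Pm[measurable]: "P j \<in> borel_measurable borel" for j
    using Ps[of j] by auto
  have qm: "(\<lambda>l. \<integral>y. P j y \<partial>mu l) \<in> borel_measurable borel" for j
  proof -
    obtain a n where "P j = (\<lambda>x. \<Sum>i\<le>n. a i * x ^ i)" using Ps by blast
    then have "(\<lambda>l. \<integral>y. P j y \<partial>mu l) = (\<lambda>l. \<Sum>i\<le>n. a i * mom l i)"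
      using poly_int by simp
    moreover have "continuous_on UNIV (\<lambda>l. \<Sum>i\<le>n. a i * mom l i)"
      by (intro continuous_intros mom_cont)
    ultimately show ?thesis by (simp add: borel_measurable_continuous_onI)
  qed
  show ?thesis
  proof (rule borel_measurable_LIMSEQ_real[OF _ qm])
    fix l :: real
    have fint: "integrable (mu l) f"
      by (rule prob_int_bound(1)[OF prob_mu, where c=1]) (auto simp: fb)
    obtain N :: nat where N: "\<bar>l\<bar> \<le> real N" using real_arch_simple by blast
    have "((\<lambda>j. (\<integral>y. P j y \<partial>mu l) - (\<integral>y. f y \<partial>mu l)) \<longlonglongrightarrow> 0)"
    proof (rule Lim_null_comparison)
      show "\<forall>\<^sub>F j in sequentially. norm ((\<integral>y. P j y \<partial>mu l) - (\<integral>y. f y \<partial>mu l)) \<le> 1 / real (Suc j)"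
        unfolding eventually_sequentially
      proof (intro exI allI impI)
        fix j assume j: "N \<le> j"
        have "(\<integral>y. P j y \<partial>mu l) - (\<integral>y. f y \<partial>mu l) = (\<integral>y. P j y - f y \<partial>mu l)"
          using Pint fint by (simp add: Bochner_Integration.integral_diff)
        also have "norm \<dots> \<le> 1 / real (Suc j)"
        proof (rule prob_int_bound(2)[OF prob_mu])
          show "(\<lambda>y. P j y - f y) \<in> borel_measurable (mu l)" by measurable
          show "AE y in mu l. norm (P j y - f y) \<le> 1 / real (Suc j)"
            using support[of l]
          proof eventually_elim
            fix y assume "\<bar>y\<bar> \<le> B + \<bar>l\<bar> + 1"
            then have "y \<in> {- Rj j .. Rj j}" using N j by (auto simp: Rj_def)
            then show "norm (P j y - f y) \<le> 1 / real (Suc j)"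
              using Pa[of y j] by simp
          qed
        qed
        finally show "norm ((\<integral>y. P j y \<partial>mu l) - (\<integral>y. f y \<partial>mu l)) \<le> 1 / real (Suc j)" .
      qed
      show "(\<lambda>j. 1 / real (Suc j)) \<longlonglongrightarrow> 0"
        using LIMSEQ_Suc[OF lim_1_over_n] by simp
    qed
    then show "(\<lambda>j. \<integral>y. P j y \<partial>mu l) \<longlonglongrightarrow> (\<integral>y. f y \<partial>mu l)"
      by (simp add: LIM_zero_iff)
  qed
qed

lemma atMost_meas: "(\<lambda>l. measure (mu l) {..a}) \<in> borel_measurable borel"
proof -
  define f where "f k y = max 0 (min 1 (1 - real (Suc k) * (y - a)))" for k y
  have cf: "continuous_on UNIV (f k)" for k unfolding f_def by (intro continuous_intros)
  have fb: "\<bar>f k y\<bar> \<le> 1" for k y unfolding f_def by auto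
  have m: "(\<lambda>l. \<integral>y. f k y \<partial>mu l) \<in> borel_measurable borel" for k
    by (rule cont_meas[OF cf fb])
  show ?thesis
  proof (rule borel_measurable_LIMSEQ_real[OF _ m])
    fix l
    have "(\<lambda>k. \<integral>y. f k y \<partial>mu l) \<longlonglongrightarrow> (\<integral>y. indicator {..a} y \<partial>mu l)"
    proof (rule integral_dominated_convergence[where w="\<lambda>y. 1"])
      show "(indicat_real {..a}) \<in> borel_measurable (mu l)" by measurable
      show "(f k) \<in> borel_measurable (mu l)" for k
        using borel_measurable_continuous_onI[OF cf[of k]] by simp
      show "integrable (mu l) (\<lambda>y. 1::real)"
        by (rule prob_int_bound(1)[OF prob_mu, where c=1]) auto
      show "\<And>k. AE y in mu l. norm (f k y) \<le> 1" using fb by simp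
      show "AE y in mu l. (\<lambda>k. f k y) \<longlonglongrightarrow> indicat_real {..a} y"
      proof (rule AE_I2)
        fix y
        show "(\<lambda>k. f k y) \<longlonglongrightarrow> indicat_real {..a} y"
        proof (cases "y \<le> a")
          case True
          have "\<And>k. real (Suc k) * (y - a) \<le> 0" using True by (intro mult_nonneg_nonpos) auto
          then have "\<And>k. f k y = 1" unfolding f_def by (simp add: min_def max_def)
          then show ?thesis using True by simp
        next
          case False
          then have ya: "0 < y - a" by simp
          obtain K :: nat where K: "1 / (y - a) \<le> real K" using real_arch_simple by blast
          have "\<forall>\<^sub>F k in sequentially. f k y = 0"
            unfolding eventually_sequentially
          proof (intro exI allI impI)
            fix k assume "K \<le> k"
            then have "1 / (y - a) \<le> real (Suc k)" using K by linarith
            then have "1 \<le> real (Suc k) * (y - a)" using ya by (simp add: divide_le_eq)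
            then show "f k y = 0" unfolding f_def by auto
          qed
          then show ?thesis using False by (simp add: tendsto_eventually)
        qed
      qed
    qed
    then show "(\<lambda>k. \<integral>y. f k y \<partial>mu l) \<longlonglongrightarrow> measure (mu l) {..a}"
      by simp
  qed
qed

lemma mu_meas: "mu \<in> measurable borel (subprob_algebra borel)"
proof (rule measurable_subprob_algebra_generated[where \<Omega>=UNIV and G="range atMost :: real set set"])
  have "sets (borel::real measure) = sets (sigma UNIV (range atMost))"
    using borel_eq_atMost by metis
  then show "sets (borel :: real measure) = sigma_sets UNIV (range atMost)" by simp
  show "Int_stable (range atMost :: real set set)" by (auto simp: Int_stable_def)
  show "range atMost \<subseteq> Pow (UNIV :: real set)" by auto
  show "subprob_space (mu l)" for l using prob_mu[of l] by (rule prob_space_imp_subprob_space)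
  show "sets (mu l) = sets borel" for l by simp
  show "\<And>A. A \<in> range atMost \<Longrightarrow> (\<lambda>l. emeasure (mu l) A) \<in> borel_measurable borel"
  proof -
    fix A :: "real set" assume "A \<in> range atMost"
    then obtain a :: real where A: "A = {..a}" by auto
    have "(\<lambda>l. emeasure (mu l) A) = (\<lambda>l. ennreal (measure (mu l) {..a}))"
      using A finite_measure.emeasure_eq_measure[OF fin_mu] by auto
    then show "(\<lambda>l. emeasure (mu l) A) \<in> borel_measurable borel" using atMost_meas by simp
  qed
  have "(\<lambda>l. emeasure (mu l) UNIV) = (\<lambda>l. 1)"
    using prob_space.emeasure_space_1[OF prob_mu] by (simp add: fun_eq_iff)
  then show "(\<lambda>l. emeasure (mu l) UNIV) \<in> borel_measurable borel" by simp
qed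

end

lemma kernel_le:
  fixes h c l :: real
  assumes h: "0 < h"
  shows "\<exists>k. \<bar>l - c\<bar> \<le> 2 ^ k * h \<and> h / ((l - c)^2 + h^2) \<le> 4 / (4 ^ k * h)"
proof -
  define P where "P k \<longleftrightarrow> \<bar>l - c\<bar> \<le> 2 ^ k * h" for k :: nat
  obtain n :: nat where "\<bar>l - c\<bar> / h < 2 ^ n" using real_arch_pow[of 2] by auto
  then have "P n" using h by (simp add: P_def divide_less_eq)
  define k where "k = (LEAST k. P k)"
  have Pk: "P k" unfolding k_def using \<open>P n\<close> by (rule LeastI)
  have bound: "h / ((l - c)^2 + h^2) \<le> 4 / (4 ^ k * h)"
  proof (cases k)
    case 0
    have "h / ((l - c)^2 + h^2) \<le> h / h^2"
      using h by (intro divide_left_mono) (auto intro!: mult_pos_pos add_nonneg_pos)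
    also have "\<dots> = 1 / h" using h by (simp add: power2_eq_square)
    also have "\<dots> \<le> 4 / h" using h by (simp add: divide_right_mono)
    finally show ?thesis using 0 by simp
  next
    case (Suc k')
    have "\<not> P k'" using Suc unfolding k_def by (metis lessI not_less_Least)
    then have lt: "2 ^ k' * h < \<bar>l - c\<bar>" by (simp add: P_def)
    have "(2 ^ k' * h)^2 \<le> (l - c)^2"
      using lt h by (metis abs_le_square_iff abs_of_nonneg less_imp_le mult_nonneg_nonneg zero_le_numeral zero_le_power less_eq_real_def)
    moreover have "(2 ^ k' * h)^2 = 4 ^ k' * h^2"
    proof -
      have "(2::real) ^ k' * 2 ^ k' = 4 ^ k'" by (simp flip: power_mult_distrib)
      then show ?thesis by (simp add: power2_eq_square algebra_simps)
    qed
    ultimately have q: "4 ^ k' * h^2 \<le> (l - c)^2" by simp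
    have pos: "0 < 4 ^ k' * h^2" using h by simp
    have q2: "4 ^ k' * h^2 \<le> (l - c)^2 + h^2" using q by (smt (verit) zero_le_power2)
    have "h / ((l - c)^2 + h^2) \<le> h / (4 ^ k' * h^2)"
      using q2 h pos by (intro frac_le) auto
    also have "\<dots> = 4 / (4 ^ k * h)"
      using h Suc by (simp add: power2_eq_square field_simps)
    finally show ?thesis .
  qed
  show ?thesis using Pk bound by (auto simp: P_def)
qed

lemma hoelder_poisson:
  fixes nu :: "real measure" and K \<alpha> h c :: real
  assumes sets: "sets nu = sets borel" and K0: "0 \<le> K" and a0: "0 \<le> \<alpha>" "\<alpha> \<le> 1"
    and H: "\<And>a b. a < b \<Longrightarrow> emeasure nu {a..b} \<le> ennreal (K * (b - a) powr \<alpha>)"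
    and h: "0 < h"
  shows "(\<integral>\<^sup>+l. ennreal (h / ((l - c)^2 + h^2)) \<partial>nu) \<le> ennreal (16 * K * h powr (\<alpha> - 1))"
proof -
  have [measurable_cong]: "sets nu = sets borel" by (rule sets)
  define I where "I k = {c - 2 ^ k * h .. c + 2 ^ k * h}" for k :: nat
  define d where "d k = 4 / (4 ^ k * h)" for k :: nat
  have d0: "0 \<le> d k" for k using h by (simp add: d_def)
  have pw: "ennreal (h / ((l - c)^2 + h^2)) \<le> (\<Sum>k. ennreal (d k) * indicator (I k) l)" for l
  proof -
    obtain k where k: "\<bar>l - c\<bar> \<le> 2 ^ k * h" "h / ((l - c)^2 + h^2) \<le> d k"
      using kernel_le[OF h, of l c] by (auto simp: d_def)
    have "ennreal (h / ((l - c)^2 + h^2)) \<le> ennreal (d k) * indicator (I k) l"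
      using k by (auto simp: I_def abs_le_iff intro: ennreal_leI)
    also have "\<dots> = (\<Sum>j\<in>{k}. ennreal (d j) * indicator (I j) l)" by (simp only: sum.insert_if finite.emptyI empty_iff if_False sum.empty add_0_right)
    also have "\<dots> \<le> (\<Sum>j. ennreal (d j) * indicator (I j) l)"
      by (intro sum_le_suminf summableI) auto
    finally show ?thesis .
  qed
  have "(\<integral>\<^sup>+l. ennreal (h / ((l - c)^2 + h^2)) \<partial>nu) \<le> (\<integral>\<^sup>+l. (\<Sum>k. ennreal (d k) * indicator (I k) l) \<partial>nu)"
    by (intro nn_integral_mono pw)
  also have "\<dots> = (\<Sum>k. \<integral>\<^sup>+l. ennreal (d k) * indicator (I k) l \<partial>nu)"
    by (intro nn_integral_suminf) (auto simp: I_def)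
  also have "\<dots> = (\<Sum>k. ennreal (d k) * emeasure nu (I k))"
    by (intro suminf_cong nn_integral_cmult_indicator) (auto simp: I_def)
  also have "\<dots> \<le> (\<Sum>k. ennreal (8 * K * h powr (\<alpha> - 1) * (1/2) ^ k))"
  proof (intro suminf_le summableI)
    fix k :: nat
    have len: "(c + 2 ^ k * h) - (c - 2 ^ k * h) = 2 ^ Suc k * h" by simp
    have "emeasure nu (I k) \<le> ennreal (K * (2 ^ Suc k * h) powr \<alpha>)"
      using H[of "c - 2 ^ k * h" "c + 2 ^ k * h"] h unfolding I_def len by simp
    then have "ennreal (d k) * emeasure nu (I k) \<le> ennreal (d k) * ennreal (K * (2 ^ Suc k * h) powr \<alpha>)"
      by (rule mult_left_mono) simp
    also have "\<dots> = ennreal (d k * (K * (2 ^ Suc k * h) powr \<alpha>))"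
      using d0 K0 by (simp add: ennreal_mult)
    also have "\<dots> \<le> ennreal (8 * K * h powr (\<alpha> - 1) * (1/2) ^ k)"
    proof (rule ennreal_leI)
      have "(2 ^ Suc k * h) powr \<alpha> = (2 ^ Suc k) powr \<alpha> * h powr \<alpha>"
        using h by (simp add: powr_mult)
      also have "(2 ^ Suc k :: real) powr \<alpha> \<le> (2 ^ Suc k) powr 1"
      proof (rule powr_mono)
        show "\<alpha> \<le> 1" by (rule a0(2))
        have "(1::real) \<le> 2 ^ Suc k" by (rule one_le_power) simp
        then show "(1::real) \<le> 2 ^ Suc k" .
      qed
      also have "(2 ^ Suc k :: real) powr 1 = 2 ^ Suc k" by simp
      finally have p: "(2 ^ Suc k * h) powr \<alpha> \<le> 2 ^ Suc k * h powr \<alpha>"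
        by (simp add: mult_right_mono)
      have "d k * (K * (2 ^ Suc k * h) powr \<alpha>) \<le> d k * (K * (2 ^ Suc k * h powr \<alpha>))"
        using p d0 K0 by (intro mult_left_mono) auto
      also have "\<dots> = 8 * K * (h powr \<alpha> / h) * (1/2) ^ k"
        using h by (simp add: d_def field_simps power_mult_distrib[symmetric])
      also have "h powr \<alpha> / h = h powr (\<alpha> - 1)"
        using h by (simp add: powr_diff)
      finally show "d k * (K * (2 ^ Suc k * h) powr \<alpha>) \<le> 8 * K * h powr (\<alpha> - 1) * (1/2) ^ k" .
    qed
    finally show "ennreal (d k) * emeasure nu (I k) \<le> ennreal (8 * K * h powr (\<alpha> - 1) * (1/2) ^ k)" .
  qed
  also have "\<dots> = ennreal (\<Sum>k. 8 * K * h powr (\<alpha> - 1) * (1/2) ^ k)"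
    using K0 by (intro suminf_ennreal2 summable_mult summable_geometric) auto
  also have "(\<Sum>k. 8 * K * h powr (\<alpha> - 1) * (1/2::real) ^ k) = 16 * K * h powr (\<alpha> - 1)"
    by (subst suminf_mult) (auto simp: suminf_geometric)
  finally show ?thesis .
qed

lemma Im_formula:
  fixes F :: complex and l :: real
  assumes p: "0 < Im F"
  defines "s \<equiv> (Re F)^2 + (Im F)^2"
  defines "h \<equiv> Im F / s" and "c \<equiv> - Re F / s"
  shows "Im (F / (1 + l * F)) = h / ((l - c)^2 + h^2)"
proof -
  have s0: "0 < s" using p by (simp add: s_def add_nonneg_pos)
  have Q: "(1 + l * Re F)^2 + (l * Im F)^2 = 1 + 2 * l * Re F + l^2 * s"
    by (simp add: s_def power2_eq_square algebra_simps)
  have Q0: "0 < 1 + 2 * l * Re F + l^2 * s"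
  proof -
    have "0 \<le> (1 + l * Re F)^2" by simp
    moreover have "(l * Im F)^2 > 0 \<or> l = 0" using p by auto
    ultimately show ?thesis using Q by (metis add_nonneg_pos add_pos_nonneg zero_less_one mult_zero_left power_zero_numeral add.right_neutral mult_zero_right zero_less_power2 add_0 zero_le_power2 less_add_same_cancel1)
  qed
  have "Im (F / (1 + l * F)) = Im F / ((1 + l * Re F)^2 + (l * Im F)^2)"
    by (simp add: Im_divide algebra_simps power2_eq_square)
  also have "\<dots> = Im F / (1 + 2 * l * Re F + l^2 * s)" by (simp only: Q)
  also have "\<dots> = h / ((l - c)^2 + h^2)"
  proof -
    have "(l - c)^2 + h^2 = (1 + 2 * l * Re F + l^2 * s) / s"
      using s0 unfolding c_def h_def
      by (simp add: field_simps power2_eq_square) (simp add: s_def algebra_simps power2_eq_square)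
    then have "h / ((l - c)^2 + h^2) = h / ((1 + 2 * l * Re F + l^2 * s) / s)" by simp
    also have "\<dots> = (h * s) / (1 + 2 * l * Re F + l^2 * s)" using s0 by simp
    also have "h * s = Im F" using s0 by (simp add: h_def)
    finally show ?thesis by simp
  qed
  finally show ?thesis .
qed

theorem mainTheorem5:
  fixes A :: "'a::{real_inner, complete_space} \<Rightarrow> 'a"
    and \<phi> :: 'a
    and mu :: "real \<Rightarrow> real measure"
    and nu :: "real measure"
    and \<alpha> :: real
  assumes sep: "separable_space (euclidean :: 'a topology)"
    and A: "bounded_selfadjoint A"
    and phi: "norm \<phi> = 1"
    and mu: "\<And>l. spectral_measure (rank_one_pert A \<phi> l) \<phi> (mu l)"
    and alpha: "0 \<le> \<alpha>" "\<alpha> \<le> 1"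
    and nu_borel: "sets nu = sets borel"
    and nu_sigma: "sigma_finite_measure nu"
    and nu_hoelder: "unif_hoelder \<alpha> nu"
  shows "(\<exists>C::real. \<forall>z::complex. Im z > 0 \<longrightarrow>
            poisson_transform (average_measure mu nu) z
              \<le> ennreal (C * ((cmod (borel_transform (mu 0) z))\<^sup>2
                               / enn2real (poisson_transform (mu 0) z)) powr (1 - \<alpha>)))
       \<and> (\<integral>\<^sup>+x. ennreal (1 / (1 + x\<^sup>2)) \<partial>(average_measure mu nu)) < \<infinity>
       \<and> (\<forall>K. compact K \<longrightarrow> emeasure (average_measure mu nu) K < \<infinity>)"
proof -
  have bl: "bounded_linear A" using A by (simp add: bounded_selfadjoint_def)
  obtain B where B: "B > 0" "\<And>x. norm (A x) \<le> norm x * B"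
    using bounded_linear.pos_bounded[OF bl] by blast
  have rk: "rk1 A \<phi> mu B"
    unfolding rk1_def using bl B phi mu by (auto simp: mult.commute)
  interpret rk1 A \<phi> mu B by (rule rk)
  have [measurable_cong]: "sets nu = sets borel" by (rule nu_borel)
  have space_nu: "space nu = UNIV" using sets_eq_imp_space_eq[OF nu_borel] by simp
  have muN: "mu \<in> measurable nu (subprob_algebra borel)"
    using mu_meas measurable_cong_sets[OF nu_borel refl] by simp
  have sets_bind_eq: "sets (nu \<bind> mu) = sets borel"
    by (rule sets_bind) (auto simp: space_nu)
  have space_bind: "space (nu \<bind> mu) = UNIV"
    using sets_eq_imp_space_eq[OF sets_bind_eq] by simp
  have avg: "average_measure mu nu = nu \<bind> mu"
  proof -
    have "nu \<bind> mu = measure_of UNIV (sets borel) (emeasure (nu \<bind> mu))"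
      using measure_of_of_measure[of "nu \<bind> mu"] by (simp add: space_bind sets_bind_eq)
    also have "\<dots> = average_measure mu nu"
      unfolding average_measure_def
    proof (rule measure_of_eq)
      show "sets borel \<subseteq> Pow UNIV" by auto
      fix X assume "X \<in> sigma_sets UNIV (sets (borel :: real measure))"
      then have X: "X \<in> sets borel"
        using sets.sigma_sets_eq[of "borel :: real measure"] by simp
      show "emeasure (nu \<bind> mu) X = (\<integral>\<^sup>+l. emeasure (mu l) X \<partial>nu)"
        by (rule emeasure_bind[OF _ muN X]) (auto simp: space_nu)
    qed
    finally show ?thesis by simp
  qed
  obtain K where K: "\<And>a b. a < b \<Longrightarrow> emeasure nu {a..b} \<le> ennreal (K * (b - a) powr \<alpha>)"
    using nu_hoelder unfolding unif_hoelder_def by blast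
  define K' where "K' = max K 0"
  have K'0: "0 \<le> K'" by (simp add: K'_def)
  have K': "emeasure nu {a..b} \<le> ennreal (K' * (b - a) powr \<alpha>)" if "a < b" for a b
  proof -
    have "K * (b - a) powr \<alpha> \<le> K' * (b - a) powr \<alpha>"
      by (intro mult_right_mono) (auto simp: K'_def)
    then show ?thesis using K[OF that] by (meson ennreal_leI order_trans)
  qed
  have main: "poisson_transform (average_measure mu nu) z
      \<le> ennreal ((16 * K') * ((cmod (borel_transform (mu 0) z))\<^sup>2
                               / enn2real (poisson_transform (mu 0) z)) powr (1 - \<alpha>))"
    if z: "0 < Im z" for z
  proof -
    define F where "F = borel_transform (mu 0) z"
    have pF: "0 < Im F" using ImF_pos[OF z] by (simp add: F_def)
    define s where "s = (Re F)^2 + (Im F)^2"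
    define h where "h = Im F / s"
    define c where "c = - Re F / s"
    have s0: "0 < s" using pF by (simp add: s_def add_nonneg_pos)
    have h0: "0 < h" using pF s0 by (simp add: h_def)
    have Fl: "Im (borel_transform (mu l) z) = h / ((l - c)^2 + h^2)" for l
    proof -
      have ne: "1 + l * F \<noteq> 0"
      proof
        assume "1 + l * F = 0"
        then have "Im (1 + l * F) = 0" by simp
        then have "l = 0" using pF by simp
        with \<open>1 + l * F = 0\<close> show False by simp
      qed
      have "borel_transform (mu l) z = F / (1 + l * F)"
        using F_ident[OF z, of l] ne by (simp add: F_def field_simps)
      then show ?thesis
        using Im_formula[OF pF, of l] by (simp add: h_def c_def s_def)
    qed
    have kern[measurable]: "(\<lambda>y. ennreal (Im z / ((y - Re z)\<^sup>2 + (Im z)\<^sup>2))) \<in> borel_measurable borel"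
      by measurable
    have "poisson_transform (average_measure mu nu) z
        = (\<integral>\<^sup>+l. \<integral>\<^sup>+y. ennreal (Im z / ((y - Re z)\<^sup>2 + (Im z)\<^sup>2)) \<partial>mu l \<partial>nu)"
      unfolding poisson_transform_def avg by (rule nn_integral_bind[OF kern muN])
    also have "\<dots> = (\<integral>\<^sup>+l. ennreal (h / ((l - c)^2 + h^2)) \<partial>nu)"
      by (intro nn_integral_cong)
         (simp add: poisson_transform_def[symmetric] poisson_eq[OF z] Fl)
    also have "\<dots> \<le> ennreal (16 * K' * h powr (\<alpha> - 1))"
      by (rule hoelder_poisson[OF nu_borel K'0 alpha K' h0])
    also have "h powr (\<alpha> - 1) = ((cmod F)\<^sup>2 / Im F) powr (1 - \<alpha>)"
    proof -
      have "(cmod F)\<^sup>2 / Im F = 1 / h"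
        using pF s0 by (simp add: h_def s_def cmod_power2)
      then have "((cmod F)\<^sup>2 / Im F) powr (1 - \<alpha>) = 1 / h powr (1 - \<alpha>)"
        using h0 by (simp add: powr_divide)
      also have "\<dots> = h powr (\<alpha> - 1)"
        using powr_minus_divide[of h "1 - \<alpha>"] by simp
      finally show ?thesis by simp
    qed
    also have "enn2real (poisson_transform (mu 0) z) = Im F"
      using poisson_eq[OF z, of 0] pF by (simp add: F_def)
    ultimately show ?thesis by (simp add: F_def mult.assoc)
  qed
  then have P1: "\<exists>C::real. \<forall>z::complex. Im z > 0 \<longrightarrow>
            poisson_transform (average_measure mu nu) z
              \<le> ennreal (C * ((cmod (borel_transform (mu 0) z))\<^sup>2
                               / enn2real (poisson_transform (mu 0) z)) powr (1 - \<alpha>))"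
    by blast
  have P2: "(\<integral>\<^sup>+x. ennreal (1 / (1 + x\<^sup>2)) \<partial>(average_measure mu nu)) < \<infinity>"
  proof -
    have "(\<integral>\<^sup>+x. ennreal (1 / (1 + x\<^sup>2)) \<partial>(average_measure mu nu)) = poisson_transform (average_measure mu nu) \<i>"
      unfolding poisson_transform_def by (simp add: add.commute)
    also have "\<dots> \<le> ennreal ((16 * K') * ((cmod (borel_transform (mu 0) \<i>))\<^sup>2
                               / enn2real (poisson_transform (mu 0) \<i>)) powr (1 - \<alpha>))"
      by (rule main) simp
    also have "\<dots> < \<infinity>" by simp
    finally show ?thesis .
  qed
  have P3: "\<forall>K. compact K \<longrightarrow> emeasure (average_measure mu nu) K < \<infinity>"
  proof (intro allI impI)
    fix C :: "real set" assume "compact C"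
    then obtain M where M: "\<And>x. x \<in> C \<Longrightarrow> \<bar>x\<bar> \<le> M"
      using compact_imp_bounded bounded_real by metis
    have Cm: "C \<in> sets borel" using \<open>compact C\<close> by (intro borel_closed compact_imp_closed)
    have sk: "sets (average_measure mu nu) = sets borel" by (simp add: avg sets_bind_eq)
    have "emeasure (average_measure mu nu) C = (\<integral>\<^sup>+x. indicator C x \<partial>(average_measure mu nu))"
      using Cm sk by (simp add: nn_integral_indicator)
    also have "\<dots> \<le> (\<integral>\<^sup>+x. ennreal (1 + M^2) * ennreal (1 / (1 + x\<^sup>2)) \<partial>(average_measure mu nu))"
    proof (intro nn_integral_mono)
      fix x
      show "indicator C x \<le> ennreal (1 + M^2) * ennreal (1 / (1 + x\<^sup>2))"
      proof (cases "x \<in> C")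
        case True
        then have "x^2 \<le> M^2" using M[OF True] by (metis abs_le_square_iff abs_ge_zero order_trans abs_of_nonneg abs_le_iff le_less_trans linorder_not_le not_less power2_abs abs_power2 power_mono)
        then have "1 \<le> (1 + M^2) * (1 / (1 + x\<^sup>2))"
          by (simp add: field_simps add_pos_nonneg)
        then have le: "ennreal 1 \<le> ennreal ((1 + M^2) * (1 / (1 + x\<^sup>2)))" by (rule ennreal_leI)
        have eq: "ennreal (1 + M^2) * ennreal (1 / (1 + x\<^sup>2)) = ennreal ((1 + M^2) * (1 / (1 + x\<^sup>2)))"
          by (rule ennreal_mult[symmetric]) auto
        have ind: "indicator C x = (1::ennreal)" using True by simp
        show ?thesis unfolding eq ind using le by (simp only: ennreal_1)
      next
        case False
        then show ?thesis by simp
      qed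
    qed
    also have "\<dots> = ennreal (1 + M^2) * (\<integral>\<^sup>+x. ennreal (1 / (1 + x\<^sup>2)) \<partial>(average_measure mu nu))"
      by (intro nn_integral_cmult, subst measurable_cong_sets[OF sk refl]) measurable
    also have "\<dots> < \<infinity>" using P2 by (simp add: ennreal_mult_less_top)
    finally show "emeasure (average_measure mu nu) C < \<infinity>" .
  qed
  show ?thesis using P1 P2 P3 by blast
qed

end
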